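(* Let $I\subseteq\mathbb{R}$ be an interval equipped with its Borel $\sigma$-algebra and Lebesgue measure $\lambda$, and let $\Theta\subseteq\mathbb{R}$ be an interval. Let $\{p_\theta\}_{\theta\in\Theta}$ be a family of strictly positive probability densities on $I$ with respect to $\lambda$, with $\mathbb{P}_\theta=p_\theta\cdot\lambda$, having strictly monotone likelihood ratio: for all $\theta'<\theta''$ in $\Theta$, the function $x\mapsto p_{\theta''}(x)/p_{\theta'}(x)$ is strictly increasing on $I$. Fix $\theta_1\in\Theta$ such that $\Theta_1=\,]-\infty,\theta_1]\cap\Theta\neq\emptyset$ and $\Theta_0=\,]\theta_1,+\infty[\cap\Theta\neq\emptyset$. Then a measurable decision rule $\phi:I\to\{0,1\}$ is an expert for the choice between $\Theta_1$ and $\Theta_0$ if and only if there exists $t\in\overline{\mathbb{R}}=[-\infty,+\infty]$ such that $\phi=f_t$ $\lambda$-almost everywhere, where $f_t(x)=\mathbf{1}_{]-\infty,t[}(x)$.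
   Context: Given a statistical model $(\Omega,\mathcal{A},(\mathbb{P}_\theta)_{\theta\in\Theta})$ in which all $\mathbb{P}_\theta$ have strictly positive densities with respect to a common measure $\mu$, and a partition $\Theta=\Theta_0\cup\Theta_1$ (disjoint), a measurable decision rule $\phi:(\Omega,\mathcal{A})\to\{0,1\}$ (the value $d$ meaning "decide $\theta\in\Theta_d$") is called an expert for the choice between $\Theta_0$ and $\Theta_1$ if for every pair $(\theta_0,\theta_1)\in\Theta_0\times\Theta_1$ and every non-negligible event $C\in\mathcal{A}$ (i.e. $\mu(C)>0$) one has $$\frac{\mathbb{P}_{\theta_1}(C\cap\{\phi=1\})}{\mathbb{P}_{\theta_1}(C)}\;\geq\;\frac{\mathbb{P}_{\theta_0}(C\cap\{\phi=1\})}{\mathbb{P}_{\theta_0}(C)}.$$ Here $\Omega=I$, $\mu=\lambda$, decision $1$ corresponds to $\Theta_1=\,]-\infty,\theta_1]\cap\Theta$ and decision $0$ to $\Theta_0=\,]\theta_1,+\infty[\cap\Theta$. *)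

theory Defs
  imports "HOL-Analysis.Analysis"
begin

text \<open>Expert decision rule. mu is the dominating measure on Omega, P the family
  of probability measures, Th0/Th1 the two parts of the parameter set.
  Decision value d means "decide theta in Th_d".\<close>
definition expert ::
  "'a measure \<Rightarrow> ('b \<Rightarrow> 'a measure) \<Rightarrow> 'b set \<Rightarrow> 'b set \<Rightarrow> ('a \<Rightarrow> nat) \<Rightarrow> bool" where
  "expert mu P Th0 Th1 phi \<longleftrightarrow>
     phi \<in> measurable mu (count_space UNIV) \<and>
     (\<forall>x\<in>space mu. phi x \<in> {0,1}) \<and>
     (\<forall>a\<in>Th0. \<forall>b\<in>Th1. \<forall>C\<in>sets mu. emeasure mu C > 0 \<longrightarrow>
        measure (P b) (C \<inter> {x\<in>space mu. phi x = 1}) / measure (P b) C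
        \<ge> measure (P a) (C \<inter> {x\<in>space mu. phi x = 1}) / measure (P a) C)"

definition f_ind :: "ereal \<Rightarrow> real \<Rightarrow> nat" where
  "f_ind t x = (if ereal x < t then 1 else 0)"

end

theory Submission
  imports Defs
begin

lemma frac_le_iff_aux:
  fixes x y u v :: real
  assumes "y > 0" "v > 0"
  shows "x / y \<le> u / v \<longleftrightarrow> x * v \<le> u * y"
  using assms by (simp add: divide_le_eq le_divide_eq mult.commute mult.left_commute)

lemma frac_less_iff_aux:
  fixes x y u v :: real
  assumes "y > 0" "v > 0"
  shows "x / y < u / v \<longleftrightarrow> x * v < u * y"
  using assms by (simp add: divide_less_eq less_divide_eq mult.commute mult.left_commute)

locale mlrsetup =
  fixes I :: "real set" and Theta :: "real set" and p :: "real \<Rightarrow> real \<Rightarrow> real"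
  assumes I_int: "is_interval I"
    and p_meas: "\<And>\<theta>. \<theta> \<in> Theta \<Longrightarrow> p \<theta> \<in> borel_measurable (restrict_space lborel I)"
    and p_pos: "\<And>\<theta> x. \<theta> \<in> Theta \<Longrightarrow> x \<in> I \<Longrightarrow> p \<theta> x > 0"
    and p_prob: "\<And>\<theta>. \<theta> \<in> Theta \<Longrightarrow>
                   (\<integral>\<^sup>+ x. ennreal (p \<theta> x) \<partial>(restrict_space lborel I)) = 1"
begin

abbreviation "M \<equiv> restrict_space lborel I"
abbreviation "P \<theta> \<equiv> density M (\<lambda>x. ennreal (p \<theta> x))"

lemma I_sets: "I \<inter> space lborel \<in> sets lborel"
  using real_interval_borel_measurable[OF I_int] by simp

lemma space_M: "space M = I"
  by (simp add: space_restrict_space)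

lemma emeasure_P:
  assumes "\<theta> \<in> Theta" "C \<in> sets M"
  shows "emeasure (P \<theta>) C = (\<integral>\<^sup>+x. ennreal (p \<theta> x) * indicator C x \<partial>M)"
  using assms p_meas by (intro emeasure_density) auto

lemma space_P1:
  assumes "\<theta> \<in> Theta"
  shows "emeasure (P \<theta>) (space M) = 1"
proof -
  have "emeasure (P \<theta>) (space M) = (\<integral>\<^sup>+x. ennreal (p \<theta> x) * indicator (space M) x \<partial>M)"
    using assms by (intro emeasure_P) auto
  also have "\<dots> = (\<integral>\<^sup>+x. ennreal (p \<theta> x) \<partial>M)"
    by (intro nn_integral_cong) (simp add: indicator_def)
  also have "\<dots> = 1" using p_prob assms by simp
  finally show ?thesis .
qed

lemma prob_P:
  assumes "\<theta> \<in> Theta"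
  shows "finite_measure (P \<theta>)"
  using space_P1[OF assms] by (intro finite_measureI) simp

lemma emeasure_P_eq:
  assumes "\<theta> \<in> Theta" "C \<in> sets M"
  shows "(\<integral>\<^sup>+x. ennreal (p \<theta> x) * indicator C x \<partial>M) = ennreal (measure (P \<theta>) C)"
proof -
  interpret finite_measure "P \<theta>" using prob_P assms(1) .
  show ?thesis using emeasure_P[OF assms] emeasure_eq_measure by metis
qed

lemma int_cmult:
  assumes "\<theta> \<in> Theta" "C \<in> sets M" "c \<ge> 0"
  shows "(\<integral>\<^sup>+x. ennreal (c * p \<theta> x) * indicator C x \<partial>M) = ennreal (c * measure (P \<theta>) C)"
proof -
  have "(\<integral>\<^sup>+x. ennreal (c * p \<theta> x) * indicator C x \<partial>M)
      = (\<integral>\<^sup>+x. ennreal c * (ennreal (p \<theta> x) * indicator C x) \<partial>M)"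
    using assms p_pos by (intro nn_integral_cong) (auto simp add: ennreal_mult mult.assoc space_restrict_space indicator_def less_imp_le)
  also have "\<dots> = ennreal c * (\<integral>\<^sup>+x. ennreal (p \<theta> x) * indicator C x \<partial>M)"
    using assms p_meas by (intro nn_integral_cmult) auto
  also have "\<dots> = ennreal (c * measure (P \<theta>) C)"
    using emeasure_P_eq[OF assms(1,2)] assms by (simp add: ennreal_mult)
  finally show ?thesis .
qed

lemma q_le:
  assumes "\<theta> \<in> Theta" "\<theta>' \<in> Theta" "C \<in> sets M" "c \<ge> 0"
    and le: "\<And>x. x \<in> C \<Longrightarrow> p \<theta> x \<le> c * p \<theta>' x"
  shows "measure (P \<theta>) C \<le> c * measure (P \<theta>') C"
proof -
  have "ennreal (measure (P \<theta>) C) = (\<integral>\<^sup>+x. ennreal (p \<theta> x) * indicator C x \<partial>M)"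
    using emeasure_P_eq assms by simp
  also have "\<dots> \<le> (\<integral>\<^sup>+x. ennreal (c * p \<theta>' x) * indicator C x \<partial>M)"
    using le by (intro nn_integral_mono) (auto simp: indicator_def intro!: ennreal_leI)
  also have "\<dots> = ennreal (c * measure (P \<theta>') C)" using int_cmult assms by simp
  finally show ?thesis using assms by (simp add: ennreal_le_iff)
qed

lemma q_ge:
  assumes "\<theta> \<in> Theta" "\<theta>' \<in> Theta" "C \<in> sets M" "c \<ge> 0"
    and le: "\<And>x. x \<in> C \<Longrightarrow> c * p \<theta>' x \<le> p \<theta> x"
  shows "c * measure (P \<theta>') C \<le> measure (P \<theta>) C"
proof -
  have "ennreal (c * measure (P \<theta>') C) = (\<integral>\<^sup>+x. ennreal (c * p \<theta>' x) * indicator C x \<partial>M)"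
    using int_cmult assms by simp
  also have "\<dots> \<le> (\<integral>\<^sup>+x. ennreal (p \<theta> x) * indicator C x \<partial>M)"
    using le by (intro nn_integral_mono) (auto simp: indicator_def intro!: ennreal_leI)
  also have "\<dots> = ennreal (measure (P \<theta>) C)"
    using emeasure_P_eq assms by simp
  finally show ?thesis by (simp add: ennreal_le_iff)
qed


lemma nn_lt_aux:
  fixes f g :: "real \<Rightarrow> real"
  assumes fm: "f \<in> borel_measurable M" and gm: "g \<in> borel_measurable M"
    and C: "C \<in> sets M" and Cpos: "emeasure M C > 0"
    and fin: "(\<integral>\<^sup>+x. ennreal (f x) * indicator C x \<partial>M) \<noteq> \<infinity>"
    and lt: "\<And>x. x \<in> C \<Longrightarrow> f x < g x" and f0: "\<And>x. x \<in> C \<Longrightarrow> 0 \<le> f x"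
  shows "(\<integral>\<^sup>+x. ennreal (f x) * indicator C x \<partial>M) < (\<integral>\<^sup>+x. ennreal (g x) * indicator C x \<partial>M)"
proof (rule nn_integral_less)
  show "(\<lambda>x. ennreal (f x) * indicator C x) \<in> borel_measurable M"
    using fm C by measurable
  show "(\<lambda>x. ennreal (g x) * indicator C x) \<in> borel_measurable M"
    using gm C by measurable
  show "AE x in M. ennreal (f x) * indicator C x \<le> ennreal (g x) * indicator C x"
    using lt by (intro AE_I2) (simp add: indicator_def ennreal_leI less_imp_le)
  show "\<not> (AE x in M. ennreal (g x) * indicator C x \<le> ennreal (f x) * indicator C x)"
  proof
    assume A: "AE x in M. ennreal (g x) * indicator C x \<le> ennreal (f x) * indicator C x"
    have "AE x in M. x \<notin> C"
    proof (rule AE_mp[OF A], intro AE_I2 impI)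
      fix x assume "ennreal (g x) * indicator C x \<le> ennreal (f x) * indicator C x"
      then show "x \<notin> C" using lt[of x] f0[of x] by (auto simp: indicator_def ennreal_le_iff)
    qed
    then have "emeasure M C = 0"
      using C by (subst (asm) AE_iff_measurable[where N=C]) (auto dest: sets.sets_into_space)
    then show False using Cpos by simp
  qed
qed (use fin in auto)

lemma q_lt:
  assumes "\<theta> \<in> Theta" "\<theta>' \<in> Theta" "C \<in> sets M" "c \<ge> 0" "emeasure M C > 0"
    and lt: "\<And>x. x \<in> C \<Longrightarrow> p \<theta> x < c * p \<theta>' x"
  shows "measure (P \<theta>) C < c * measure (P \<theta>') C"
proof -
  have "ennreal (measure (P \<theta>) C) = (\<integral>\<^sup>+x. ennreal (p \<theta> x) * indicator C x \<partial>M)"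
    using emeasure_P_eq assms by simp
  also have "\<dots> < (\<integral>\<^sup>+x. ennreal (c * p \<theta>' x) * indicator C x \<partial>M)"
  proof (rule nn_lt_aux)
    show "(\<integral>\<^sup>+x. ennreal (p \<theta> x) * indicator C x \<partial>M) \<noteq> \<infinity>"
      using emeasure_P_eq assms by simp
    show "p \<theta> \<in> borel_measurable M" using p_meas assms by simp
    show "(\<lambda>x. c * p \<theta>' x) \<in> borel_measurable M" using p_meas assms by simp
    show "\<And>x. x \<in> C \<Longrightarrow> 0 \<le> p \<theta> x"
      using p_pos assms sets.sets_into_space[OF assms(3)] by (force simp: space_M intro: less_imp_le)
  qed (use assms in auto)
  also have "\<dots> = ennreal (c * measure (P \<theta>') C)" using int_cmult assms by simp
  finally show ?thesis by (simp add: ennreal_less_iff)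
qed

lemma q_gt:
  assumes "\<theta> \<in> Theta" "\<theta>' \<in> Theta" "C \<in> sets M" "c \<ge> 0" "emeasure M C > 0"
    and lt: "\<And>x. x \<in> C \<Longrightarrow> c * p \<theta>' x < p \<theta> x"
  shows "c * measure (P \<theta>') C < measure (P \<theta>) C"
proof -
  have "ennreal (c * measure (P \<theta>') C) = (\<integral>\<^sup>+x. ennreal (c * p \<theta>' x) * indicator C x \<partial>M)"
    using int_cmult assms by simp
  also have "\<dots> < (\<integral>\<^sup>+x. ennreal (p \<theta> x) * indicator C x \<partial>M)"
  proof (rule nn_lt_aux)
    show "(\<integral>\<^sup>+x. ennreal (c * p \<theta>' x) * indicator C x \<partial>M) \<noteq> \<infinity>"
      using int_cmult assms by simp
    show "p \<theta> \<in> borel_measurable M" using p_meas assms by simp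
    show "(\<lambda>x. c * p \<theta>' x) \<in> borel_measurable M" using p_meas assms by simp
    show "\<And>x. x \<in> C \<Longrightarrow> 0 \<le> c * p \<theta>' x"
      using p_pos assms sets.sets_into_space[OF assms(3)] by (force simp: space_M intro: less_imp_le)
  qed (use assms in auto)
  also have "\<dots> = ennreal (measure (P \<theta>) C)"
    using emeasure_P_eq assms by simp
  finally show ?thesis using assms(4) by (metis ennreal_less_iff measure_nonneg mult_nonneg_nonneg)
qed

lemma q_pos:
  assumes "\<theta> \<in> Theta" "C \<in> sets M" "emeasure M C > 0"
  shows "measure (P \<theta>) C > 0"
  using q_gt[OF assms(1) assms(1) assms(2) order_refl assms(3)] p_pos assms(1)
    sets.sets_into_space[OF assms(2)] by (force simp: space_M)

lemma q_add:
  assumes "\<theta> \<in> Theta" "C \<in> sets M" "A \<in> sets M"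
  shows "measure (P \<theta>) C = measure (P \<theta>) (C \<inter> A) + measure (P \<theta>) (C - A)"
proof -
  interpret finite_measure "P \<theta>" using prob_P assms(1) .
  have "C = (C \<inter> A) \<union> (C - A)" by auto
  then have "measure (P \<theta>) C = measure (P \<theta>) ((C \<inter> A) \<union> (C - A))" by simp
  also have "\<dots> = measure (P \<theta>) (C \<inter> A) + measure (P \<theta>) (C - A)"
    using assms by (intro finite_measure_Union) auto
  finally show ?thesis .
qed



lemma backward:
  assumes MLR: "strict_mono_on I (\<lambda>x. p a x / p b x)"
    and ab: "a \<in> Theta" "b \<in> Theta"
    and C: "C \<in> sets M" "emeasure M C > 0"
    and A: "A \<in> sets M" "A \<subseteq> I"
    and sep: "\<And>x y. x \<in> A \<Longrightarrow> y \<in> I - A \<Longrightarrow> x < y"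
  shows "measure (P a) (C \<inter> A) / measure (P a) C \<le> measure (P b) (C \<inter> A) / measure (P b) C"
proof -
  define D where "D = C \<inter> A"
  define E where "E = C - A"
  define r where "r = (\<lambda>x. p a x / p b x)"
  have CI: "C \<subseteq> I" using sets.sets_into_space[OF C(1)] space_M by simp
  have DE: "D \<in> sets M" "E \<in> sets M" using C A by (auto simp: D_def E_def)
  have addA: "measure (P a) C = measure (P a) D + measure (P a) E"
    and addB: "measure (P b) C = measure (P b) D + measure (P b) E"
    unfolding D_def E_def by (rule q_add[OF ab(1) C(1) A(1)], rule q_add[OF ab(2) C(1) A(1)])
  have posA: "measure (P a) C > 0" and posB: "measure (P b) C > 0"
    using q_pos ab C by auto
  have nn: "measure (P a) D \<ge> 0" "measure (P a) E \<ge> 0" "measure (P b) D \<ge> 0" "measure (P b) E \<ge> 0"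
    by auto
  have main: "measure (P a) D * measure (P b) E \<le> measure (P b) D * measure (P a) E"
  proof (cases "D = {} \<or> E = {}")
    case True
    then show ?thesis using nn by auto
  next
    case False
    then obtain y0 where y0: "y0 \<in> E" by auto
    from False have Dne: "D \<noteq> {}" by auto
    have rpos: "\<And>x. x \<in> I \<Longrightarrow> r x > 0" using p_pos ab by (simp add: r_def)
    have lt: "\<And>x y. x \<in> D \<Longrightarrow> y \<in> E \<Longrightarrow> r x < r y"
    proof -
      fix x y assume "x \<in> D" "y \<in> E"
      then have "x \<in> I" "y \<in> I" "x < y" using CI A sep by (auto simp: D_def E_def)
      then show "r x < r y" using MLR unfolding r_def strict_mono_on_def by auto
    qed
    define c where "c = Sup (r ` D)"
    have bdd: "bdd_above (r ` D)" using lt[OF _ y0] unfolding bdd_above_def by (metis imageE order.strict_implies_order)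
    have rc: "\<And>x. x \<in> D \<Longrightarrow> r x \<le> c" using bdd by (auto simp: c_def intro: cSup_upper)
    have cr: "c \<le> r y" if y: "y \<in> E" for y
      unfolding c_def
    proof (rule cSup_least)
      show "r ` D \<noteq> {}" using Dne by simp
      fix z assume "z \<in> r ` D"
      then obtain x where "x \<in> D" "z = r x" by auto
      then show "z \<le> r y" using lt[OF _ y, of x] by simp
    qed
    obtain x0 where "x0 \<in> D" using Dne by auto
    then have c0: "c \<ge> 0" using rc[of x0] rpos[of x0] CI by (auto simp: D_def)
    have "measure (P a) D \<le> c * measure (P b) D"
    proof (rule q_le[OF ab DE(1) c0])
      fix x assume x: "x \<in> D"
      then have "x \<in> I" using CI by (auto simp: D_def)
      then show "p a x \<le> c * p b x" using rc[OF x] p_pos[OF ab(2)] by (simp add: r_def divide_le_eq)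
    qed
    moreover have "c * measure (P b) E \<le> measure (P a) E"
    proof (rule q_ge[OF ab(1) ab(2) DE(2) c0])
      fix x assume x: "x \<in> E"
      then have "x \<in> I" using CI by (auto simp: E_def)
      then show "c * p b x \<le> p a x" using cr[OF x] p_pos[OF ab(2)] by (simp add: r_def le_divide_eq)
    qed
    ultimately have "measure (P a) D * measure (P b) E \<le> (c * measure (P b) D) * measure (P b) E"
      "measure (P b) D * (c * measure (P b) E) \<le> measure (P b) D * measure (P a) E"
      using nn by (auto intro: mult_right_mono mult_left_mono)
    then show ?thesis by (simp add: algebra_simps)
  qed
  have "measure (P a) D * measure (P b) C \<le> measure (P b) D * measure (P a) C"
    unfolding addA addB using main by (simp add: distrib_left mult.commute)
  then show ?thesis
    unfolding D_def[symmetric] using posA posB by (simp add: frac_le_iff_aux)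
qed

lemma key:
  assumes MLR: "strict_mono_on I (\<lambda>x. p a x / p b x)"
    and ab: "a \<in> Theta" "b \<in> Theta"
    and EF: "E \<in> sets M" "F \<in> sets M" "emeasure M E > 0" "emeasure M F > 0"
    and m: "m \<in> I" "\<And>x. x \<in> E \<Longrightarrow> x < m" "\<And>y. y \<in> F \<Longrightarrow> m < y"
  shows "measure (P b) F / measure (P b) (E \<union> F) < measure (P a) F / measure (P a) (E \<union> F)"
proof -
  define r where "r = (\<lambda>x. p a x / p b x)"
  define c where "c = r m"
  have EI: "E \<subseteq> I" "F \<subseteq> I" using sets.sets_into_space EF space_M by auto
  have disj: "E \<inter> F = {}" using m by force
  have c0: "c > 0" using p_pos ab m by (simp add: c_def r_def)
  have un: "(E \<union> F) \<inter> F = F" "(E \<union> F) - F = E" using disj by auto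
  have addA: "measure (P a) (E \<union> F) = measure (P a) F + measure (P a) E"
    and addB: "measure (P b) (E \<union> F) = measure (P b) F + measure (P b) E"
    using q_add[of _ "E \<union> F" F] ab EF un by auto
  have pos: "measure (P a) E > 0" "measure (P a) F > 0" "measure (P b) E > 0" "measure (P b) F > 0"
    using q_pos ab EF by auto
  have 1: "measure (P a) E < c * measure (P b) E"
  proof (rule q_lt[OF ab EF(1) _ EF(3)])
    fix x assume x: "x \<in> E"
    then have "r x < c" using MLR m EI unfolding c_def r_def strict_mono_on_def by auto
    then show "p a x < c * p b x" using p_pos[OF ab(2), of x] x EI by (auto simp: r_def divide_less_eq)
  qed (use c0 in auto)
  have 2: "c * measure (P b) F < measure (P a) F"
  proof (rule q_gt[OF ab(1) ab(2) EF(2) _ EF(4)])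
    fix x assume x: "x \<in> F"
    then have "c < r x" using MLR m EI unfolding c_def r_def strict_mono_on_def by auto
    then show "c * p b x < p a x" using p_pos[OF ab(2), of x] x EI by (auto simp: r_def less_divide_eq)
  qed (use c0 in auto)
  have "measure (P b) F * measure (P a) E < measure (P b) F * (c * measure (P b) E)"
    using 1 pos by simp
  also have "\<dots> = (c * measure (P b) F) * measure (P b) E" by simp
  also have "\<dots> < measure (P a) F * measure (P b) E"
    using 2 pos by (intro mult_strict_right_mono) auto
  finally have main: "measure (P b) F * measure (P a) E < measure (P a) F * measure (P b) E" .
  have "measure (P b) F * measure (P a) (E \<union> F) < measure (P a) F * measure (P b) (E \<union> F)"
    unfolding addA addB using main by (simp add: distrib_left mult.commute)
  then show ?thesis using pos addA addB by (simp add: frac_less_iff_aux)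
qed

lemma sets_M_I: "B \<in> sets borel \<Longrightarrow> I \<inter> B \<in> sets M"
  using I_sets by (subst sets_restrict_space_iff) auto

end

lemma rat_between_left:
  fixes x :: real and t :: ereal
  assumes "ereal x < t"
  shows "\<exists>q\<in>\<rat>. x < q \<and> ereal q < t"
proof (cases t)
  case (real r)
  then obtain q where "q \<in> \<rat>" "x < q" "q < r" using assms Rats_dense_in_real by auto
  then show ?thesis using real by auto
next
  case PInf
  then obtain q where "q \<in> \<rat>" "x < q" "q < x + 1" using Rats_dense_in_real[of x "x+1"] by auto
  then show ?thesis using PInf by auto
qed (use assms in auto)

lemma rat_between_right:
  fixes x :: real and t :: ereal
  assumes "t < ereal x"
  shows "\<exists>q\<in>\<rat>. q < x \<and> t < ereal q"
proof (cases t)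
  case (real r)
  then obtain q where "q \<in> \<rat>" "r < q" "q < x" using assms Rats_dense_in_real by auto
  then show ?thesis using real by auto
next
  case MInf
  then obtain q where "q \<in> \<rat>" "x - 1 < q" "q < x" using Rats_dense_in_real[of "x-1" x] by auto
  then show ?thesis using MInf by auto
qed (use assms in auto)

theorem proposition3p1:
  fixes I Theta :: "real set" and p :: "real \<Rightarrow> real \<Rightarrow> real"
    and theta1 :: real and phi :: "real \<Rightarrow> nat"
  assumes I_int: "is_interval I"
    and Theta_int: "is_interval Theta"
    and p_meas: "\<And>\<theta>. \<theta> \<in> Theta \<Longrightarrow> p \<theta> \<in> borel_measurable (restrict_space lborel I)"
    and p_pos: "\<And>\<theta> x. \<theta> \<in> Theta \<Longrightarrow> x \<in> I \<Longrightarrow> p \<theta> x > 0"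
    and p_prob: "\<And>\<theta>. \<theta> \<in> Theta \<Longrightarrow>
                   (\<integral>\<^sup>+ x. ennreal (p \<theta> x) \<partial>(restrict_space lborel I)) = 1"
    and MLR: "\<And>\<theta>' \<theta>''. \<theta>' \<in> Theta \<Longrightarrow> \<theta>'' \<in> Theta \<Longrightarrow> \<theta>' < \<theta>'' \<Longrightarrow>
                 strict_mono_on I (\<lambda>x. p \<theta>'' x / p \<theta>' x)"
    and theta1_in: "theta1 \<in> Theta"
    and Th1_ne: "{\<theta>\<in>Theta. \<theta> \<le> theta1} \<noteq> {}"
    and Th0_ne: "{\<theta>\<in>Theta. \<theta> > theta1} \<noteq> {}"
    and phi_meas: "phi \<in> measurable (restrict_space lborel I) (count_space UNIV)"
    and phi_range: "\<And>x. x \<in> I \<Longrightarrow> phi x \<in> {0, 1}"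
  shows "expert (restrict_space lborel I)
            (\<lambda>\<theta>. density (restrict_space lborel I) (\<lambda>x. ennreal (p \<theta> x)))
            {\<theta>\<in>Theta. \<theta> > theta1} {\<theta>\<in>Theta. \<theta> \<le> theta1} phi
         \<longleftrightarrow> (\<exists>t::ereal. AE x in restrict_space lborel I. phi x = f_ind t x)"
  proof -
  interpret mlrsetup I Theta p using I_int p_meas p_pos p_prob by unfold_locales auto
  let ?M = "restrict_space lborel I"
  let ?P = "\<lambda>\<theta>. density (restrict_space lborel I) (\<lambda>x. ennreal (p \<theta> x))"
  let ?Th0 = "{\<theta>\<in>Theta. \<theta> > theta1}" and ?Th1 = "{\<theta>\<in>Theta. \<theta> \<le> theta1}"
  have sM: "space ?M = I" by (rule space_M)
  have half_sets: "{x\<in>I. ereal x < t} \<in> sets ?M" for t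
  proof -
    have "{x::real. ereal x < t} \<in> sets borel" by measurable
    then have "I \<inter> {x::real. ereal x < t} \<in> sets ?M" by (rule sets_M_I)
    moreover have "{x\<in>I. ereal x < t} = I \<inter> {x::real. ereal x < t}" by auto
    ultimately show ?thesis by simp
  qed
  have phi1_sets: "{x\<in>space ?M. phi x = 1} \<in> sets ?M"
  proof -
    have "phi -` {1} \<inter> space ?M \<in> sets ?M" using phi_meas by (rule measurable_sets) simp
    moreover have "phi -` {1} \<inter> space ?M = {x\<in>space ?M. phi x = 1}" by auto
    ultimately show ?thesis by simp
  qed
  have phi0_sets: "{x\<in>space ?M. phi x = 0} \<in> sets ?M"
  proof -
    have "phi -` {0} \<inter> space ?M \<in> sets ?M" using phi_meas by (rule measurable_sets) simp
    moreover have "phi -` {0} \<inter> space ?M = {x\<in>space ?M. phi x = 0}" by auto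
    ultimately show ?thesis by simp
  qed
  show ?thesis
  proof
    assume ex: "expert ?M ?P ?Th0 ?Th1 phi"
    show "\<exists>t::ereal. AE x in ?M. phi x = f_ind t x"
proof -
      define S0 where "S0 = {x\<in>space ?M. phi x = 0}"
      define S1 where "S1 = {x\<in>space ?M. phi x = 1}"
      have exc: "\<forall>a\<in>?Th0. \<forall>b\<in>?Th1. \<forall>C\<in>sets ?M. emeasure ?M C > 0 \<longrightarrow>
        measure (?P b) (C \<inter> S1) / measure (?P b) C \<ge> measure (?P a) (C \<inter> S1) / measure (?P a) C"
        using ex unfolding expert_def S1_def by blast
      obtain a where a: "a \<in> ?Th0" using Th0_ne by blast
      obtain b where b: "b \<in> ?Th1" using Th1_ne by blast
      have mono: "strict_mono_on I (\<lambda>x. p a x / p b x)" using MLR a b by auto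
      have lt_sets: "S0 \<inter> {x. x < m} \<in> sets ?M" for m
      proof -
        have "S0 \<inter> {x. x < m} = S0 \<inter> (I \<inter> {..<m})" by (auto simp: S0_def sM)
        then show ?thesis using phi0_sets sets_M_I[of "{..<m}"] by (auto simp: S0_def)
      qed
      have gt_sets: "S1 \<inter> {x. m < x} \<in> sets ?M" for m
      proof -
        have "S1 \<inter> {x. m < x} = S1 \<inter> (I \<inter> {m<..})" by (auto simp: S1_def sM)
        then show ?thesis using phi1_sets sets_M_I[of "{m<..}"] by (auto simp: S1_def)
      qed
      have keyc: "emeasure ?M (S1 \<inter> {x. m < x}) = 0" if E0: "emeasure ?M (S0 \<inter> {x. x < m}) > 0" for m
      proof (rule ccontr)
        define E where "E = S0 \<inter> {x. x < m}"
        define F where "F = S1 \<inter> {x. m < x}"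
        assume "emeasure ?M (S1 \<inter> {x. m < x}) \<noteq> 0"
        then have F0: "emeasure ?M F > 0" by (simp add: F_def zero_less_iff_neq_zero)
        have E0': "emeasure ?M E > 0" using E0 by (simp add: E_def)
        have EF: "E \<in> sets ?M" "F \<in> sets ?M" using lt_sets gt_sets by (auto simp: E_def F_def)
        obtain x where x: "x \<in> E" using E0' by (metis emeasure_empty equals0I less_irrefl)
        obtain y where y: "y \<in> F" using F0 by (metis emeasure_empty equals0I less_irrefl)
        have "x \<in> I" "y \<in> I" "x < m" "m < y" using x y by (auto simp: E_def F_def S0_def S1_def sM)
        then have mI: "m \<in> I" using I_int unfolding is_interval_1 by (meson less_imp_le)
        have CF: "(E \<union> F) \<inter> S1 = F" by (auto simp: E_def F_def S0_def S1_def)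
        have C: "E \<union> F \<in> sets ?M" using EF by auto
        have "emeasure ?M E \<le> emeasure ?M (E \<union> F)" using C by (intro emeasure_mono) auto
        then have Cp: "emeasure ?M (E \<union> F) > 0" using E0' by order
        have "measure (?P b) F / measure (?P b) (E \<union> F) \<ge> measure (?P a) F / measure (?P a) (E \<union> F)"
        proof -
          have "\<forall>C\<in>sets ?M. emeasure ?M C > 0 \<longrightarrow>
            measure (?P b) (C \<inter> S1) / measure (?P b) C \<ge> measure (?P a) (C \<inter> S1) / measure (?P a) C"
            using exc a b by blast
          then have "measure (?P b) ((E \<union> F) \<inter> S1) / measure (?P b) (E \<union> F) \<ge>
              measure (?P a) ((E \<union> F) \<inter> S1) / measure (?P a) (E \<union> F)"
            using C Cp by blast
          then show ?thesis unfolding CF .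
        qed
        moreover have "measure (?P b) F / measure (?P b) (E \<union> F) < measure (?P a) F / measure (?P a) (E \<union> F)"
        proof (rule key[OF mono _ _ EF E0' F0 mI])
          show "a \<in> Theta" "b \<in> Theta" using a b by auto
          show "\<And>x. x \<in> E \<Longrightarrow> x < m" by (simp add: E_def)
          show "\<And>x. x \<in> F \<Longrightarrow> m < x" by (simp add: F_def)
        qed
        ultimately show False by simp
      qed
      define T0 where "T0 = {m. emeasure ?M (S0 \<inter> {x. x < m}) = 0}"
      define t where "t = Sup (ereal ` T0)"
      have AEa: "AE x in ?M. x \<in> S0 \<longrightarrow> \<not> ereal x < t"
      proof -
        let ?Q = "{q\<in>\<rat>. ereal q < t}"
        have cQ: "countable ?Q" by (rule countable_subset[OF _ countable_rat]) auto
        have "AE x in ?M. \<forall>q\<in>?Q. x \<in> S0 \<longrightarrow> \<not> x < q"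
        proof (rule AE_ball_countable'[OF _ cQ])
          fix q assume "q \<in> ?Q"
          then have "ereal q < Sup (ereal ` T0)" by (simp add: t_def)
          then obtain m where m: "m \<in> T0" "ereal q < ereal m" by (auto simp: less_Sup_iff)
          then have "S0 \<inter> {x. x < m} \<in> null_sets ?M" using lt_sets by (auto simp: T0_def intro: null_setsI)
          then have "AE x in ?M. x \<notin> S0 \<inter> {x. x < m}" by (rule AE_not_in)
          then show "AE x in ?M. x \<in> S0 \<longrightarrow> \<not> x < q"
          proof (rule AE_mp, intro AE_I2 impI)
            fix x assume "x \<notin> S0 \<inter> {x. x < m}" "x \<in> S0"
            then show "\<not> x < q" using m(2) by auto
          qed
        qed
        then show ?thesis
        proof (rule AE_mp, intro AE_I2 impI notI)
          fix x assume H: "\<forall>q\<in>?Q. x \<in> S0 \<longrightarrow> \<not> x < q" and "x \<in> S0" and xt: "ereal x < t"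
          then obtain q where "q \<in> \<rat>" "x < q" "ereal q < t" using rat_between_left by blast
          then show False using H \<open>x \<in> S0\<close> by auto
        qed
      qed
      have AEb: "AE x in ?M. x \<in> S1 \<longrightarrow> \<not> t < ereal x"
      proof -
        let ?Q = "{q\<in>\<rat>. t < ereal q}"
        have cQ: "countable ?Q" by (rule countable_subset[OF _ countable_rat]) auto
        have "AE x in ?M. \<forall>q\<in>?Q. x \<in> S1 \<longrightarrow> \<not> q < x"
        proof (rule AE_ball_countable'[OF _ cQ])
          fix q assume q: "q \<in> ?Q"
          have "q \<notin> T0"
          proof
            assume "q \<in> T0"
            then have "ereal q \<le> t" unfolding t_def by (auto intro: Sup_upper)
            then show False using q by (simp add: not_less[symmetric])
          qed
          then have "emeasure ?M (S0 \<inter> {x. x < q}) > 0" by (simp add: T0_def zero_less_iff_neq_zero)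
          then have "emeasure ?M (S1 \<inter> {x. q < x}) = 0" by (rule keyc)
          then have "S1 \<inter> {x. q < x} \<in> null_sets ?M" using gt_sets by (auto intro: null_setsI)
          then have "AE x in ?M. x \<notin> S1 \<inter> {x. q < x}" by (rule AE_not_in)
          then show "AE x in ?M. x \<in> S1 \<longrightarrow> \<not> q < x"
          proof (rule AE_mp, intro AE_I2 impI)
            fix x assume "x \<notin> S1 \<inter> {x. q < x}" "x \<in> S1"
            then show "\<not> q < x" by auto
          qed
        qed
        then show ?thesis
        proof (rule AE_mp, intro AE_I2 impI notI)
          fix x assume H: "\<forall>q\<in>?Q. x \<in> S1 \<longrightarrow> \<not> q < x" and "x \<in> S1" and xt: "t < ereal x"
          then obtain q where "q \<in> \<rat>" "q < x" "t < ereal q" using rat_between_right by blast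
          then show False using H \<open>x \<in> S1\<close> by auto
        qed
      qed
      have AEc: "AE x in ?M. ereal x \<noteq> t"
      proof (cases t)
        case (real r)
        have "AE x in lborel. x \<in> I \<longrightarrow> x \<noteq> r" using AE_lborel_singleton[of r] by (auto elim!: AE_mp)
        then have "AE x in ?M. x \<noteq> r" using I_sets by (subst AE_restrict_space_iff) auto
        then show ?thesis using real by auto
      qed auto
      have "AE x in ?M. phi x = f_ind t x"
        using AEa AEb AEc AE_space
      proof (rule AE_mp[OF AE_conjI[OF AE_conjI[OF AE_conjI]]], intro AE_I2 impI)
        fix x assume H: "(((x \<in> S0 \<longrightarrow> \<not> ereal x < t) \<and> (x \<in> S1 \<longrightarrow> \<not> t < ereal x)) \<and> ereal x \<noteq> t) \<and> x \<in> space ?M"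
        then have "phi x \<in> {0, 1}" using phi_range sM by auto
        then show "phi x = f_ind t x" using H unfolding f_ind_def S0_def S1_def
          by (auto simp: not_less neq_iff)
      qed
      then show ?thesis by blast
    qed
  next
    assume "\<exists>t::ereal. AE x in ?M. phi x = f_ind t x"
    then obtain t :: ereal where t: "AE x in ?M. phi x = f_ind t x" by blast
    define A where "A = {x\<in>I. ereal x < t}"
    have A: "A \<in> sets ?M" "A \<subseteq> I" using half_sets by (auto simp: A_def)
    have sep: "x < y" if "x \<in> A" "y \<in> I - A" for x y
    proof -
      have "ereal x < t" "\<not> ereal y < t" using that by (auto simp: A_def)
      then have "ereal x < ereal y" by (meson not_less order_less_le_trans)
      then show ?thesis by simp
    qed
    have eq: "measure (?P \<theta>) (C \<inter> {x\<in>space ?M. phi x = 1}) = measure (?P \<theta>) (C \<inter> A)"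
      if "\<theta> \<in> Theta" "C \<in> sets ?M" for \<theta> C
    proof (rule measure_eq_AE)
      have "AE x in ?M. 0 < ennreal (p \<theta> x) \<longrightarrow> (x \<in> C \<inter> {x\<in>space ?M. phi x = 1} \<longleftrightarrow> x \<in> C \<inter> A)"
        using t AE_space
      proof (rule AE_mp[OF AE_conjI], intro AE_I2 impI)
        fix x assume "phi x = f_ind t x \<and> x \<in> space ?M"
        then show "x \<in> C \<inter> {x\<in>space ?M. phi x = 1} \<longleftrightarrow> x \<in> C \<inter> A"
          by (auto simp: A_def f_ind_def sM)
      qed
      then show "AE x in ?P \<theta>. x \<in> C \<inter> {x\<in>space ?M. phi x = 1} \<longleftrightarrow> x \<in> C \<inter> A"
        using that p_meas by (subst AE_density) auto
      show "C \<inter> {x\<in>space ?M. phi x = 1} \<in> sets (?P \<theta>)" using that phi1_sets by auto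
      show "C \<inter> A \<in> sets (?P \<theta>)" using that A by auto
    qed
    show "expert ?M ?P ?Th0 ?Th1 phi"
      unfolding expert_def
    proof (intro conjI ballI impI)
      show "phi \<in> measurable ?M (count_space UNIV)" by (rule phi_meas)
      show "phi x \<in> {0, 1}" if "x \<in> space ?M" for x using phi_range that sM by auto
      fix a b C assume a: "a \<in> ?Th0" and b: "b \<in> ?Th1" and C: "C \<in> sets ?M" and Cp: "emeasure ?M C > 0"
      have mono: "strict_mono_on I (\<lambda>x. p a x / p b x)" using MLR a b by auto
      show "measure (?P a) (C \<inter> {x\<in>space ?M. phi x = 1}) / measure (?P a) C
          \<le> measure (?P b) (C \<inter> {x\<in>space ?M. phi x = 1}) / measure (?P b) C"
        using backward[OF mono _ _ C Cp A sep] eq[OF _ C] a b by auto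
    qed
  qed
qed

end
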